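(* Let $s\in\mathbb R$, $p,q\in(0,+\infty]$ and $x_0\in\mathbb R^d$, and assume the wavelet system satisfies the dyadic covering property. Then there exists a sequence $\mathcal C\in b^{s,q}_p$ whose divergence exponent at $x_0$ satisfies $\delta_{\mathcal C}(x_0)=-s+\frac dp$.
   Context: Setting: integers $d,N\ge1$, bounded fast-decaying $\psi^{(1)},\dots,\psi^{(N)}:\mathbb R^d\to\mathbb C$, wavelets $\psi^{(i)}_{j,k}(x)=\psi^{(i)}(2^jx-k)$, $j\ge0$, $k\in\mathbb Z^d$; dyadic cubes $\lambda_{j,k}=\prod_{m=1}^d[k_m2^{-j},(k_m+1)2^{-j})$ of scale $j$; coefficients indexed by $(i,\lambda)$; $\Lambda_j$ = pairs $(i,\lambda)$ with $\lambda$ of scale $j$. $b^{s,q}_p$: sequences $(c^{(i)}_\lambda)$ with $\big(\big(\sum_{(i,\lambda)\in\Lambda_j}|c^{(i)}_\lambda2^{(s-d/p)j}|^p\big)^{1/p}\big)_{j\ge0}\in\ell^q$ (supremum if $p=\infty$; $d/p=0$ if $p=\infty$). Divergence exponent $\delta_{\mathcal C}(x)$: supremum of $\gamma$ such that there exist $C>0$ and $(i_n,j_n,k_n)$ with $j_n\to\infty$ and $|c^{(i_n)}_{j_n,k_n}\psi^{(i_n)}_{j_n,k_n}(x)|\ge C2^{\gamma j_n}$. Dyadic covering property: there exist $C_0>0$ and finitely many triplets $(i_l,j_l,k_l)$ with $j_l\ge1$ such that every $x\in[0,1)^d$ has some $l$ with $|\psi^{(i_l)}(2^{j_l}x-k_l)|\ge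 C_0$. *)

theory Defs
  imports "HOL-Analysis.Analysis"
begin

text \<open>Dimension d = CARD('d).
  A coefficient sequence is c :: nat => nat => ('d => int) => complex, c i j k = c^(i)_{j,k}.\<close>

definition dyad_arg :: "nat \<Rightarrow> real^'d \<Rightarrow> ('d::finite \<Rightarrow> int) \<Rightarrow> real^'d" where
  "dyad_arg j x k = (\<chi> m. 2 ^ j * x $ m - of_int (k m))"

definition wav :: "(nat \<Rightarrow> real^'d \<Rightarrow> complex) \<Rightarrow> nat \<Rightarrow> nat \<Rightarrow> ('d::finite \<Rightarrow> int) \<Rightarrow> real^'d \<Rightarrow> complex" where
  "wav \<psi> i j k x = \<psi> i (dyad_arg j x k)"

definition d_over_p :: "'d::finite itself \<Rightarrow> ereal \<Rightarrow> real" where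
  "d_over_p TYPE('d) p = (if p = \<infinity> then 0 else real CARD('d) / real_of_ereal p)"

definition level_norm :: "nat \<Rightarrow> real \<Rightarrow> ereal \<Rightarrow> (nat \<Rightarrow> nat \<Rightarrow> ('d::finite \<Rightarrow> int) \<Rightarrow> complex) \<Rightarrow> nat \<Rightarrow> real" where
  "level_norm N s p c j =
     (if p = \<infinity> then Sup {norm (c i j k) * 2 powr (s * real j) | i k. i \<in> {1..N}}
      else (infsum (\<lambda>(i,k). (norm (c i j k) * 2 powr ((s - d_over_p TYPE('d) p) * real j))
                                 powr real_of_ereal p) ({1..N} \<times> UNIV))
           powr (1 / real_of_ereal p))"

definition in_bspq :: "nat \<Rightarrow> real \<Rightarrow> ereal \<Rightarrow> ereal \<Rightarrow> (nat \<Rightarrow> nat \<Rightarrow> ('d::finite \<Rightarrow> int) \<Rightarrow> complex) \<Rightarrow> bool" where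
  "in_bspq N s p q c \<longleftrightarrow>
     (\<forall>j. if p = \<infinity> then bdd_above {norm (c i j k) * 2 powr (s * real j) | i k. i \<in> {1..N}}
          else (\<lambda>(i,k). (norm (c i j k) * 2 powr ((s - d_over_p TYPE('d) p) * real j))
                          powr real_of_ereal p) summable_on ({1..N} \<times> UNIV)) \<and>
     (if q = \<infinity> then bdd_above (range (level_norm N s p c))
      else summable (\<lambda>j. level_norm N s p c j powr real_of_ereal q))"

text \<open>Divergence exponent delta_C(x) (an extended real: Sup of the empty set is -infinity).\<close>
definition div_exp :: "nat \<Rightarrow> (nat \<Rightarrow> real^'d \<Rightarrow> complex) \<Rightarrow> (nat \<Rightarrow> nat \<Rightarrow> ('d::finite \<Rightarrow> int) \<Rightarrow> complex) \<Rightarrow> real^'d \<Rightarrow> ereal" where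
  "div_exp N \<psi> c x = Sup {ereal \<gamma> | \<gamma>. \<exists>C>0. \<exists>ii jj kk.
       (\<forall>n. ii n \<in> {1..N}) \<and> filterlim jj at_top sequentially \<and>
       (\<forall>n. norm (c (ii n) (jj n) (kk n) * wav \<psi> (ii n) (jj n) (kk n) x) \<ge> C * 2 powr (\<gamma> * real (jj n)))}"

definition dyadic_covering :: "nat \<Rightarrow> (nat \<Rightarrow> real^'d \<Rightarrow> complex) \<Rightarrow> ('d::finite) itself \<Rightarrow> bool" where
  "dyadic_covering N \<psi> _ \<longleftrightarrow> (\<exists>C0>0. \<exists>T :: (nat \<times> nat \<times> ('d \<Rightarrow> int)) set. finite T \<and>
     (\<forall>(i,j,k)\<in>T. i \<in> {1..N} \<and> j \<ge> 1) \<and>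
     (\<forall>x::real^'d. (\<forall>m. 0 \<le> x $ m \<and> x $ m < 1) \<longrightarrow>
        (\<exists>(i,j,k)\<in>T. norm (\<psi> i (dyad_arg j x k)) \<ge> C0)))"

end

theory Submission
  imports Defs "HOL-Real_Asymp.Real_Asymp"
begin

lemma ev_powr_le: fixes r e :: real assumes "e > 0"
  shows "eventually (\<lambda>j::nat. (real j + 1) powr r \<le> 2 powr (e * real j)) at_top"
  using assms by real_asymp

lemma lim_powr_top: fixes e :: real assumes "e > 0"
  shows "filterlim (\<lambda>j::nat. 2 powr (e * real j)) at_top at_top"
  using assms by real_asymp

lemma single_support:
  fixes F :: "'a \<Rightarrow> real"
  assumes "\<And>x. x \<noteq> a \<Longrightarrow> F x = 0"
  shows "F summable_on S" "infsum F S = (if a \<in> S then F a else 0)"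
proof -
  have "infsum F S = infsum F (S \<inter> {a})"
    by (rule infsum_cong_neutral) (use assms in auto)
  also have "\<dots> = (if a \<in> S then F a else 0)" by (cases "a \<in> S") auto
  finally show "infsum F S = (if a \<in> S then F a else 0)" .
  have "F summable_on S \<longleftrightarrow> F summable_on (S \<inter> {a})"
    by (rule summable_on_cong_neutral) (use assms in auto)
  then show "F summable_on S" by simp
qed

lemma summable_inv_sq: "summable (\<lambda>j::nat. (real j + 1) powr (-2))"
proof -
  have "summable (\<lambda>n::nat. real n powr (-2))" by (simp add: summable_real_powr_iff)
  then have "summable (\<lambda>n::nat. real (Suc n) powr (-2))" by (subst summable_Suc_iff)
  then show ?thesis by (simp add: add.commute)
qed

theorem mainTheorem15:
  fixes N :: nat and \<psi> :: "nat \<Rightarrow> real^'d::finite \<Rightarrow> complex"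
    and s :: real and p q :: ereal and x0 :: "real^'d"
  assumes N: "N \<ge> 1"
    and bounded: "\<forall>i\<in>{1..N}. \<exists>B. \<forall>x. norm (\<psi> i x) \<le> B"
    and fast_decay: "\<forall>i\<in>{1..N}. \<forall>M::real. \<exists>C. \<forall>x. norm (\<psi> i x) \<le> C * (1 + norm x) powr (- M)"
    and p: "0 < p" and q: "0 < q"
    and cov: "dyadic_covering N \<psi> TYPE('d)"
  shows "\<exists>c. in_bspq N s p q c \<and>
             div_exp N \<psi> c x0 = ereal (- s + d_over_p TYPE('d) p)"
proof -
  define P where "P = real_of_ereal p"
  define Q where "Q = real_of_ereal q"
  define D where "D = d_over_p TYPE('d) p"
  define g0 where "g0 = - s + D"
  define r where "r = (if q = \<infinity> then 1 else 2 / Q)"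
  have Ppos: "p \<noteq> \<infinity> \<Longrightarrow> P > 0" using p unfolding P_def by (cases p) auto
  have Qpos: "q \<noteq> \<infinity> \<Longrightarrow> Q > 0" using q unfolding Q_def by (cases q) auto
  have rpos: "r > 0" using Qpos unfolding r_def by auto
  have Dinf: "p = \<infinity> \<Longrightarrow> D = 0" unfolding D_def d_over_p_def by simp
  define w where "w j = (real j + 1) powr (-r)" for j :: nat
  have w_pos: "\<And>j. w j > 0" by (simp add: w_def)
  have w_inv: "\<And>j. w j = inverse ((real j + 1) powr r)" by (simp add: w_def powr_minus)
  have w_le1: "\<And>j. w j \<le> 1"
  proof -
    fix j
    have "1 \<le> (real j + 1) powr r" using rpos by (intro ge_one_powr_ge_zero) auto
    then show "w j \<le> 1" unfolding w_inv by (simp add: inverse_le_1_iff)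
  qed
  define a where "a j = 2 powr (g0 * real j) * w j" for j :: nat
  have a_pos: "\<And>j. a j > 0" using w_pos by (simp add: a_def)
  have aw: "\<And>j. a j * 2 powr ((s - D) * real j) = w j"
  proof -
    fix j
    have "a j * 2 powr ((s - D) * real j) = w j * (2 powr (g0 * real j) * 2 powr ((s - D) * real j))"
      by (simp add: a_def)
    also have "2 powr (g0 * real j) * 2 powr ((s - D) * real j) = 2 powr (g0 * real j + (s - D) * real j)"
      by (simp add: powr_add)
    also have "g0 * real j + (s - D) * real j = 0" by (simp add: g0_def algebra_simps)
    finally show "a j * 2 powr ((s - D) * real j) = w j" by simp
  qed
  have a_le: "\<And>j. a j \<le> 2 powr (g0 * real j)"
    using w_le1 by (simp add: a_def mult_left_le)
  from cov obtain C0 T where C0: "C0 > 0" and Tfin: "finite T"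
    and Tprop: "\<forall>(i,j,k)\<in>T. i \<in> {1..N} \<and> j \<ge> 1"
    and Tcov: "\<forall>x::real^'d. (\<forall>m. 0 \<le> x $ m \<and> x $ m < 1) \<longrightarrow>
        (\<exists>(i,j,k)\<in>T. norm (\<psi> i (dyad_arg j x k)) \<ge> C0)"
    unfolding dyadic_covering_def by blast
  define M where "M = Max ((\<lambda>t. fst (snd t)) ` T)"
  have M1: "M \<ge> 1"
  proof -
    have "\<forall>m. 0 \<le> (0::real^'d) $ m \<and> (0::real^'d) $ m < 1" by simp
    then obtain i j k where ijk: "(i,j,k) \<in> T" using Tcov by blast
    then have "j \<ge> 1" using Tprop by auto
    moreover have "j \<le> M" unfolding M_def using Tfin ijk
      by (intro Max_ge) (auto simp: image_iff intro!: bexI[of _ "(i,j,k)"])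
    ultimately show ?thesis by simp
  qed
  define xn where "xn n = (\<chi> m. frac (2 ^ (n*M) * x0 $ m))" for n :: nat
  have "\<forall>n. \<exists>t\<in>T. norm (\<psi> (fst t) (dyad_arg (fst (snd t)) (xn n) (snd (snd t)))) \<ge> C0"
  proof
    fix n
    have "\<forall>m. 0 \<le> xn n $ m \<and> xn n $ m < 1" by (simp add: xn_def frac_lt_1)
    then obtain i j k where "(i,j,k) \<in> T" "norm (\<psi> i (dyad_arg j (xn n) k)) \<ge> C0"
      using Tcov by blast
    then show "\<exists>t\<in>T. norm (\<psi> (fst t) (dyad_arg (fst (snd t)) (xn n) (snd (snd t)))) \<ge> C0"
      by force
  qed
  then obtain f where f1: "\<And>n. f n \<in> T"
    and f2: "\<And>n. norm (\<psi> (fst (f n)) (dyad_arg (fst (snd (f n))) (xn n) (snd (snd (f n))))) \<ge> C0"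
    by metis
  define ii where "ii n = fst (f n)" for n
  define ll where "ll n = fst (snd (f n))" for n
  define kp where "kp n = snd (snd (f n))" for n
  have ii_in: "\<And>n. ii n \<in> {1..N}" and ll1: "\<And>n. 1 \<le> ll n"
    using f1 Tprop unfolding ii_def ll_def by (auto simp: case_prod_beta)
  have llM: "\<And>n. ll n \<le> M" unfolding M_def ll_def using f1 Tfin by (auto intro: Max_ge)
  define jj where "jj n = n * M + ll n" for n
  define kk where "kk n = (\<lambda>m. 2 ^ ll n * \<lfloor>2 ^ (n*M) * x0 $ m\<rfloor> + kp n m)" for n
  have dyad: "\<And>n. dyad_arg (jj n) x0 (kk n) = dyad_arg (ll n) (xn n) (kp n)"
    by (simp add: vec_eq_iff dyad_arg_def jj_def kk_def xn_def frac_def power_add algebra_simps)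
  have psi_lb: "\<And>n. norm (\<psi> (ii n) (dyad_arg (jj n) x0 (kk n))) \<ge> C0"
    using f2 dyad unfolding ii_def ll_def kp_def by simp
  have jj_ge: "\<And>n. n \<le> jj n"
  proof -
    fix n
    have "n * 1 \<le> n * M" using M1 by (intro mult_le_mono2)
    then show "n \<le> jj n" unfolding jj_def by linarith
  qed
  have jj_inj: "\<And>n m. jj n = jj m \<Longrightarrow> n = m"
  proof (rule ccontr)
    fix n m assume eq: "jj n = jj m" and ne: "n \<noteq> m"
    have lt: "jj x < jj y" if "x < y" for x y
    proof -
      have "Suc x * M \<le> y * M" using that by (intro mult_le_mono1) simp
      then show ?thesis using llM[of x] ll1[of y] by (simp add: jj_def)
    qed
    show False using ne eq lt[of n m] lt[of m n] by (cases "n < m") auto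
  qed
  define c where "c i j k = (if \<exists>n. j = jj n \<and> i = ii n \<and> k = kk n
      then complex_of_real (a j) else 0)" for i j k
  have c_norm: "\<And>i j k. norm (c i j k) \<le> a j" using a_pos by (simp add: c_def less_imp_le)
  have c_at: "\<And>n. c (ii n) (jj n) (kk n) = complex_of_real (a (jj n))" by (auto simp: c_def)
  have c_single: "\<And>j. \<exists>z. \<forall>i k. (i,k) \<noteq> z \<longrightarrow> c i j k = 0"
  proof -
    fix j
    show "\<exists>z. \<forall>i k. (i,k) \<noteq> z \<longrightarrow> c i j k = 0"
    proof (cases "\<exists>n. j = jj n")
      case True
      then obtain n where n: "j = jj n" by blast
      show ?thesis
        by (rule exI[of _ "(ii n, kk n)"]) (use n jj_inj in \<open>auto simp: c_def\<close>)
    next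
      case False
      then show ?thesis by (auto simp: c_def)
    qed
  qed
  define L where "L = level_norm N s p c"
  have lev: "0 \<le> L j \<and> L j \<le> w j \<and> (if p = \<infinity> then bdd_above {norm (c i j k) * 2 powr (s * real j) | i k. i \<in> {1..N}}
          else (\<lambda>(i,k). (norm (c i j k) * 2 powr ((s - d_over_p TYPE('d) p) * real j))
                          powr real_of_ereal p) summable_on ({1..N} \<times> UNIV))" for j
  proof (cases "p = \<infinity>")
    case True
    define S where "S = {norm (c i j k) * 2 powr (s * real j) | i k. i \<in> {1..N}}"
    have Sle: "\<And>x. x \<in> S \<Longrightarrow> x \<le> w j"
    proof -
      fix x assume "x \<in> S"
      then obtain i k where x: "x = norm (c i j k) * 2 powr (s * real j)" unfolding S_def by blast
      have "x \<le> a j * 2 powr ((s - D) * real j)" using c_norm[of i j k] True Dinf x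
        by (simp add: mult_right_mono)
      then show "x \<le> w j" using aw by simp
    qed
    have Sne: "norm (c 1 j (\<lambda>_. 0)) * 2 powr (s * real j) \<in> S" using N unfolding S_def by auto
    have bdd: "bdd_above S" using Sle by (auto simp: bdd_above_def)
    have "L j = Sup S" using True by (simp add: L_def level_norm_def S_def)
    moreover have "Sup S \<le> w j" using Sle Sne by (intro cSup_least) auto
    moreover have "0 \<le> Sup S" using Sne bdd by (meson cSup_upper norm_ge_zero order_trans powr_ge_zero zero_le_mult_iff)
    ultimately show ?thesis using True bdd S_def by simp
  next
    case False
    have Pp: "P > 0" using Ppos False by simp
    define F where "F = (\<lambda>(i,k). (norm (c i j k) * 2 powr ((s - D) * real j)) powr P)"
    obtain z where z: "\<And>i k. (i,k) \<noteq> z \<Longrightarrow> c i j k = 0" using c_single[of j] by blast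
    have Fz: "\<And>x. x \<noteq> z \<Longrightarrow> F x = 0" using z by (auto simp: F_def)
    have summ: "F summable_on ({1..N} \<times> UNIV)" using single_support(1)[where a=z and F=F, OF Fz] .
    have Fle: "F x \<le> w j powr P" for x
    proof -
      obtain i k where x: "x = (i,k)" by fastforce
      have "norm (c i j k) * 2 powr ((s - D) * real j) \<le> a j * 2 powr ((s - D) * real j)"
        using c_norm[of i j k] by (simp add: mult_right_mono)
      then have "F x \<le> (a j * 2 powr ((s - D) * real j)) powr P"
        unfolding F_def x using Pp by (simp add: powr_mono2)
      then show ?thesis using aw by simp
    qed
    have Fnn: "F x \<ge> 0" for x by (simp add: F_def case_prod_beta)
    have I0': "0 \<le> w j powr P" by simp
    have I: "infsum F ({1..N} \<times> UNIV) \<le> w j powr P"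
      using single_support(2)[where a=z and F=F and S="{1..N} \<times> UNIV", OF Fz] Fle[of z] I0' by simp
    have I0: "infsum F ({1..N} \<times> UNIV) \<ge> 0" using Fnn by (intro infsum_nonneg) auto
    have Leq: "L j = infsum F ({1..N} \<times> UNIV) powr (1 / P)"
      using False by (simp add: L_def level_norm_def F_def D_def P_def)
    have "infsum F ({1..N} \<times> UNIV) powr (1 / P) \<le> (w j powr P) powr (1 / P)"
      using I I0 Pp by (intro powr_mono2) auto
    also have "\<dots> = w j" using Pp w_pos[of j] by (simp add: powr_powr)
    finally show ?thesis using Leq summ False by (simp add: F_def D_def P_def)
  qed
  have inb: "in_bspq N s p q c"
    unfolding in_bspq_def
  proof (intro conjI allI)
    fix j show "if p = \<infinity> then bdd_above {norm (c i j k) * 2 powr (s * real j) | i k. i \<in> {1..N}}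
          else (\<lambda>(i,k). (norm (c i j k) * 2 powr ((s - d_over_p TYPE('d) p) * real j))
                          powr real_of_ereal p) summable_on ({1..N} \<times> UNIV)"
      using lev[of j] by blast
  next
    show "if q = \<infinity> then bdd_above (range (level_norm N s p c))
      else summable (\<lambda>j. level_norm N s p c j powr real_of_ereal q)"
    proof (cases "q = \<infinity>")
      case True
      have "\<And>j. L j \<le> 1" using lev w_le1 by (meson order_trans)
      then show ?thesis using True by (auto simp: L_def bdd_above_def)
    next
      case False
      have Qp: "Q > 0" using Qpos False by simp
      have "summable (\<lambda>j. L j powr Q)"
      proof (rule summable_comparison_test'[OF summable_inv_sq])
        fix j :: nat assume "j \<ge> 0"
        have "norm (L j powr Q) = L j powr Q" by simp
        also have "\<dots> \<le> w j powr Q" using lev[of j] Qp by (intro powr_mono2) auto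
        also have "\<dots> = (real j + 1) powr (-2)" using Qp False
          by (simp add: w_def powr_powr r_def)
        finally show "norm (L j powr Q) \<le> (real j + 1) powr (-2)" .
      qed
      then show ?thesis using False by (simp add: L_def Q_def)
    qed
  qed
  from bounded obtain Bf where Bf: "\<And>i x. i \<in> {1..N} \<Longrightarrow> norm (\<psi> i x) \<le> Bf i"
    by metis
  define B where "B = (\<Sum>i\<in>{1..N}. \<bar>Bf i\<bar>)"
  have Bb: "\<And>i x. i \<in> {1..N} \<Longrightarrow> norm (\<psi> i x) \<le> B"
  proof -
    fix i x assume i: "i \<in> {1..N}"
    have "\<bar>Bf i\<bar> \<le> B" unfolding B_def using i by (intro member_le_sum) auto
    then show "norm (\<psi> i x) \<le> B" using Bf[OF i, of x] by linarith
  qed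
  define G where "G = {ereal \<gamma> | \<gamma>. \<exists>C>0. \<exists>ii jj kk.
       (\<forall>n. ii n \<in> {1..N}) \<and> filterlim jj at_top sequentially \<and>
       (\<forall>n. norm (c (ii n) (jj n) (kk n) * wav \<psi> (ii n) (jj n) (kk n) x0) \<ge> C * 2 powr (\<gamma> * real (jj n)))}"
  have upper: "x \<le> ereal g0" if "x \<in> G" for x
  proof -
    obtain \<gamma> C ii' jj' kk' where x: "x = ereal \<gamma>" and Cp: "C > 0" and ii': "\<forall>n. ii' n \<in> {1..N}"
      and jjl: "filterlim jj' at_top sequentially"
      and lb: "\<forall>n. norm (c (ii' n) (jj' n) (kk' n) * wav \<psi> (ii' n) (jj' n) (kk' n) x0) \<ge> C * 2 powr (\<gamma> * real (jj' n))"
      using \<open>x \<in> G\<close> unfolding G_def by blast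
    show ?thesis
    proof (rule ccontr)
      assume "\<not> x \<le> ereal g0"
      then have e: "\<gamma> - g0 > 0" using x by simp
      have "filterlim (\<lambda>n. 2 powr ((\<gamma> - g0) * real (jj' n))) at_top sequentially"
        using filterlim_compose[OF lim_powr_top[OF e] jjl] by simp
      then have "eventually (\<lambda>n. B / C < 2 powr ((\<gamma> - g0) * real (jj' n))) sequentially"
        by (simp add: filterlim_at_top_dense)
      then obtain n where n: "B / C < 2 powr ((\<gamma> - g0) * real (jj' n))"
        by (auto simp: eventually_sequentially)
      define j where "j = jj' n"
      have "C * 2 powr (\<gamma> * real j) \<le> norm (c (ii' n) j (kk' n)) * norm (\<psi> (ii' n) (dyad_arg j x0 (kk' n)))"
        using lb[rule_format, of n] by (simp add: j_def wav_def norm_mult)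
      also have "\<dots> \<le> 2 powr (g0 * real j) * B"
        using c_norm[of "ii' n" j "kk' n"] a_le[of j] Bb[OF ii'[rule_format, of n]]
        by (intro mult_mono) (auto intro: order_trans)
      finally have h: "C * 2 powr (\<gamma> * real j) \<le> 2 powr (g0 * real j) * B" .
      have "2 powr (\<gamma> * real j) = 2 powr ((\<gamma> - g0) * real j) * 2 powr (g0 * real j)"
        by (simp add: powr_add[symmetric] algebra_simps)
      with h have "(C * 2 powr ((\<gamma> - g0) * real j)) * 2 powr (g0 * real j) \<le> B * 2 powr (g0 * real j)"
        by (simp add: algebra_simps)
      then have "C * 2 powr ((\<gamma> - g0) * real j) \<le> B" by simp
      then have "2 powr ((\<gamma> - g0) * real j) \<le> B / C" using Cp by (simp add: pos_le_divide_eq mult.commute)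
      then show False using n j_def by simp
    qed
  qed
  have lower: "ereal (g0 - e) \<in> G" if e: "e > 0" for e
  proof -
    obtain N1 where N1: "\<And>j. j \<ge> N1 \<Longrightarrow> (real j + 1) powr r \<le> 2 powr (e * real j)"
      using ev_powr_le[OF e, of r] by (auto simp: eventually_sequentially)
    define ii' where "ii' n = ii (n + N1)" for n
    define jj' where "jj' n = jj (n + N1)" for n
    define kk' where "kk' n = kk (n + N1)" for n
    have "filterlim jj' at_top sequentially"
      unfolding filterlim_at_top eventually_sequentially
    proof
      fix Z show "\<exists>N. \<forall>n\<ge>N. Z \<le> jj' n"
        using jj_ge unfolding jj'_def by (metis le_add1 order_trans)
    qed
    moreover have "\<forall>n. norm (c (ii' n) (jj' n) (kk' n) * wav \<psi> (ii' n) (jj' n) (kk' n) x0) \<ge> C0 * 2 powr ((g0 - e) * real (jj' n))"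
    proof
      fix n
      define m where "m = n + N1"
      define j where "j = jj m"
      have jN: "j \<ge> N1" using jj_ge[of m] unfolding j_def m_def by simp
      have "2 powr (- e * real j) = inverse (2 powr (e * real j))" by (simp add: powr_minus)
      also have "\<dots> \<le> inverse ((real j + 1) powr r)"
        using N1[OF jN] by (intro le_imp_inverse_le) auto
      also have "\<dots> = w j" using w_inv by simp
      finally have we: "2 powr (- e * real j) \<le> w j" .
      have "2 powr ((g0 - e) * real j) = 2 powr (g0 * real j) * 2 powr (- e * real j)"
        by (simp add: powr_add[symmetric] algebra_simps)
      also have "\<dots> \<le> a j" unfolding a_def using we by (intro mult_left_mono) auto
      finally have ag: "2 powr ((g0 - e) * real j) \<le> a j" .
      have "C0 * 2 powr ((g0 - e) * real j) \<le> norm (\<psi> (ii m) (dyad_arg j x0 (kk m))) * a j"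
        using psi_lb[of m] ag C0 unfolding j_def by (intro mult_mono) auto
      also have "\<dots> = norm (c (ii m) j (kk m) * wav \<psi> (ii m) j (kk m) x0)"
        using a_pos[of j] by (simp add: j_def c_at wav_def norm_mult)
      finally show "norm (c (ii' n) (jj' n) (kk' n) * wav \<psi> (ii' n) (jj' n) (kk' n) x0) \<ge> C0 * 2 powr ((g0 - e) * real (jj' n))"
        by (simp add: ii'_def jj'_def kk'_def m_def j_def)
    qed
    moreover have "\<forall>n. ii' n \<in> {1..N}" using ii_in unfolding ii'_def by blast
    ultimately show ?thesis unfolding G_def using C0 by blast
  qed
  have "Sup G = ereal g0"
  proof (rule antisym)
    show "Sup G \<le> ereal g0" using upper by (intro Sup_least) auto
    show "ereal g0 \<le> Sup G"
    proof (rule ereal_le_epsilon2)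
      fix e :: real assume e: "0 < e"
      have "ereal (g0 - e) \<le> Sup G" using lower[OF e] by (rule Sup_upper)
      then show "ereal g0 \<le> Sup G + ereal e"
      proof -
        have "ereal g0 = ereal (g0 - e) + ereal e" by simp
        also have "\<dots> \<le> Sup G + ereal e" using \<open>ereal (g0 - e) \<le> Sup G\<close> by (rule add_right_mono)
        finally show ?thesis .
      qed
    qed
  qed
  then have "div_exp N \<psi> c x0 = ereal (- s + d_over_p TYPE('d) p)"
    unfolding div_exp_def G_def g0_def D_def by simp
  with inb show ?thesis by blast
qed

end
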